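(* Let $D$ be a non-commutative division ring with center $F$, let $M$ be an irreducible metabelian locally solvable maximal subgroup of $D^*$, and let $A$ be a maximal abelian normal subgroup of $M$. If $N$ is a subgroup of $M$ with $A\subsetneq N$, then $N$ is irreducible.
   Context: $D^*$ is the multiplicative group of $D$; maximal subgroup = proper subgroup maximal among proper subgroups. A subgroup $G\le D^*$ is irreducible if the division subring $F(G)$ generated by $F\cup G$ equals $D$. Locally solvable: every finitely generated subgroup solvable. Metabelian: the derived subgroup is abelian. A maximal abelian normal subgroup is an abelian normal subgroup not properly contained in another abelian normal subgroup. *)

theory Defs
  imports Main "HOL-Algebra.Solvable_Groups"
begin

definition Dstar :: "'a::division_ring monoid" where
  "Dstar = \<lparr>carrier = - {0}, mult = (*), one = 1\<rparr>"

definition center :: "'a::division_ring set" where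
  "center = {z. \<forall>x. z * x = x * z}"

definition division_subring :: "'a::division_ring set \<Rightarrow> bool" where
  "division_subring S \<longleftrightarrow> 0 \<in> S \<and> 1 \<in> S \<and>
     (\<forall>x\<in>S. \<forall>y\<in>S. x + y \<in> S \<and> x * y \<in> S) \<and>
     (\<forall>x\<in>S. - x \<in> S) \<and> (\<forall>x\<in>S. inverse x \<in> S)"

definition gen_division_subring :: "'a::division_ring set \<Rightarrow> 'a set" where
  "gen_division_subring X = \<Inter> {S. division_subring S \<and> X \<subseteq> S}"

definition irreducible_subgroup :: "'a::division_ring set \<Rightarrow> bool" where
  "irreducible_subgroup G \<longleftrightarrow> gen_division_subring (center \<union> G) = UNIV"

definition maximal_subgroup :: "'a::division_ring set \<Rightarrow> bool" where
  "maximal_subgroup M \<longleftrightarrow> subgroup M Dstar \<and> M \<noteq> carrier Dstar \<and>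
     (\<forall>K. subgroup K Dstar \<and> M \<subseteq> K \<and> K \<noteq> carrier Dstar \<longrightarrow> K = M)"

definition locally_solvable :: "('a, 'b) monoid_scheme \<Rightarrow> 'a set \<Rightarrow> bool" where
  "locally_solvable G H \<longleftrightarrow>
     (\<forall>S. finite S \<and> S \<subseteq> H \<longrightarrow> solvable (G\<lparr>carrier := generate G S\<rparr>))"

definition abelian_set :: "('a, 'b) monoid_scheme \<Rightarrow> 'a set \<Rightarrow> bool" where
  "abelian_set G H \<longleftrightarrow> (\<forall>x\<in>H. \<forall>y\<in>H. x \<otimes>\<^bsub>G\<^esub> y = y \<otimes>\<^bsub>G\<^esub> x)"

definition metabelian :: "('a, 'b) monoid_scheme \<Rightarrow> 'a set \<Rightarrow> bool" where
  "metabelian G H \<longleftrightarrow> abelian_set G (derived G H)"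

definition max_abelian_normal :: "('a, 'b) monoid_scheme \<Rightarrow> 'a set \<Rightarrow> 'a set \<Rightarrow> bool" where
  "max_abelian_normal G M A \<longleftrightarrow>
     A \<lhd> G\<lparr>carrier := M\<rparr> \<and> abelian_set G A \<and>
     (\<forall>B. B \<lhd> G\<lparr>carrier := M\<rparr> \<and> abelian_set G B \<and> A \<subseteq> B \<longrightarrow> B = A)"

end

theory Submission
  imports Defs
begin


lemma Dstar_simps[simp]: "carrier (Dstar::'a::division_ring monoid) = -{0}"
  "mult (Dstar::'a::division_ring monoid) = (*)" "one (Dstar::'a::division_ring monoid) = 1"
  by (simp_all add: Dstar_def)

lemma inv_sub:
  fixes S :: "'a::division_ring set"
  assumes "x \<in> S" "inverse x \<in> S" "x \<noteq> 0"
  shows "inv\<^bsub>Dstar\<lparr>carrier := S\<rparr>\<^esub> x = inverse x"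
  unfolding m_inv_def using assms
  by (intro the_equality) (auto simp: Dstar_def intro: inverse_unique[symmetric])

lemma inv_D:
  fixes x :: "'a::division_ring"
  assumes "x \<noteq> 0"
  shows "inv\<^bsub>Dstar\<^esub> x = inverse x"
  unfolding m_inv_def using assms
  by (intro the_equality) (auto simp: Dstar_def intro: inverse_unique[symmetric])

definition grp :: "'a::division_ring set \<Rightarrow> bool" where
  "grp H \<longleftrightarrow> H \<subseteq> -{0} \<and> 1 \<in> H \<and> (\<forall>x\<in>H. \<forall>y\<in>H. x*y \<in> H) \<and> (\<forall>x\<in>H. inverse x \<in> H)"

lemma subgroup_D_iff: "subgroup H (Dstar::'a::division_ring monoid) \<longleftrightarrow> grp H"
proof
  assume "subgroup H (Dstar::'a monoid)"
  then interpret subgroup H "Dstar::'a monoid" .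
  have "inverse x \<in> H" if "x \<in> H" for x
  proof -
    have "x \<noteq> 0" using subset that by auto
    then show ?thesis using m_inv_closed[OF that] by (simp add: inv_D)
  qed
  then show "grp H" unfolding grp_def using subset m_closed one_closed
    by auto
next
  assume "grp H"
  then show "subgroup H (Dstar::'a monoid)"
    apply (unfold_locales)
       apply (auto simp: grp_def)
    by (metis inv_D)
qed

lemma subgroup_sub_iff:
  fixes S :: "'a::division_ring set"
  assumes "grp S"
  shows "subgroup H (Dstar\<lparr>carrier := S\<rparr>) \<longleftrightarrow> grp H \<and> H \<subseteq> S"
proof
  assume "subgroup H (Dstar\<lparr>carrier := S\<rparr>)"
  then interpret subgroup H "Dstar\<lparr>carrier := S\<rparr>" .
  have "\<forall>x\<in>H. inverse x \<in> H"
  proof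
    fix x assume "x \<in> H"
    then have "x \<in> S" using subset by auto
    then have "inv\<^bsub>Dstar\<lparr>carrier := S\<rparr>\<^esub> x = inverse x" using assms
      by (intro inv_sub) (auto simp: grp_def)
    then show "inverse x \<in> H" using m_inv_closed[OF \<open>x \<in> H\<close>] by simp
  qed
  then show "grp H \<and> H \<subseteq> S" unfolding grp_def using subset m_closed one_closed assms
    by (auto simp: Dstar_def grp_def)
next
  assume h: "grp H \<and> H \<subseteq> S"
  show "subgroup H (Dstar\<lparr>carrier := S\<rparr>)"
  proof
    show "H \<subseteq> carrier (Dstar\<lparr>carrier := S\<rparr>)" using h by simp
    show "x \<otimes>\<^bsub>Dstar\<lparr>carrier := S\<rparr>\<^esub> y \<in> H" if "x \<in> H" "y \<in> H" for x y
      using h that by (auto simp: grp_def Dstar_def)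
    show "\<one>\<^bsub>Dstar\<lparr>carrier := S\<rparr>\<^esub> \<in> H" using h by (auto simp: grp_def Dstar_def)
    show "inv\<^bsub>Dstar\<lparr>carrier := S\<rparr>\<^esub> x \<in> H" if "x \<in> H" for x
    proof -
      have "inv\<^bsub>Dstar\<lparr>carrier := S\<rparr>\<^esub> x = inverse x" using h that assms
        by (intro inv_sub) (auto simp: grp_def)
      then show ?thesis using h that by (auto simp: grp_def)
    qed
  qed
qed

lemma group_D: "group (Dstar::'a::division_ring monoid)"
proof (rule groupI)
  show "\<exists>y\<in>carrier Dstar. y \<otimes>\<^bsub>Dstar\<^esub> x = \<one>\<^bsub>Dstar\<^esub>" if "x \<in> carrier Dstar" for x :: 'a
    using that by (intro bexI[of _ "inverse x"]) (simp_all add: Dstar_def)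
qed (simp_all add: Dstar_def mult.assoc)



abbreviation "ds \<equiv> division_subring"
abbreviation "gen \<equiv> gen_division_subring"

lemma gen_ds: "ds (gen X)"
  unfolding gen_division_subring_def division_subring_def by auto

lemma gen_incl: "X \<subseteq> gen X"
  unfolding gen_division_subring_def by auto

lemma gen_min: "ds S \<Longrightarrow> X \<subseteq> S \<Longrightarrow> gen X \<subseteq> S"
  unfolding gen_division_subring_def by auto

lemma ds_UNIV: "ds UNIV" unfolding division_subring_def by auto

lemma conj_inv: 
  fixes x a :: "'a::division_ring"
  assumes "x \<noteq> 0" shows "x * inverse a * inverse x = inverse (x * a * inverse x)"
proof (cases "a = 0")
  case False
  then show ?thesis using assms
    by (simp add: nonzero_inverse_mult_distrib mult.assoc)
qed simp

lemma conj_gen: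
  fixes x :: "'a::division_ring"
  assumes "x \<noteq> 0" "ds Y" "\<forall>y\<in>X. x*y*inverse x \<in> Y"
  shows "\<forall>z\<in>gen X. x*z*inverse x \<in> Y"
proof -
  have "ds {z. x*z*inverse x \<in> Y}"
    unfolding division_subring_def
  proof (intro conjI ballI)
    show "0 \<in> {z. x * z * inverse x \<in> Y}" using assms(2) by (simp add: division_subring_def)
    show "1 \<in> {z. x * z * inverse x \<in> Y}" using assms by (simp add: division_subring_def)
    fix a b assume a: "a \<in> {z. x * z * inverse x \<in> Y}" and b: "b \<in> {z. x * z * inverse x \<in> Y}"
    have "x*(a+b)*inverse x = x*a*inverse x + x*b*inverse x" by (simp add: algebra_simps)
    then show "a + b \<in> {z. x * z * inverse x \<in> Y}" using a b assms(2)
      by (simp add: division_subring_def)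
    have "(x*a*inverse x) * (x*b*inverse x) = x*a*(inverse x * x)*b*inverse x"
      by (simp add: mult.assoc)
    also have "\<dots> = x*(a*b)*inverse x" using assms(1) by (simp add: mult.assoc)
    finally have "x*(a*b)*inverse x = (x*a*inverse x) * (x*b*inverse x)" by simp
    then show "a * b \<in> {z. x * z * inverse x \<in> Y}" using a b assms(2)
      by (simp add: division_subring_def)
  next
    fix a assume a: "a \<in> {z. x * z * inverse x \<in> Y}"
    have "x*(-a)*inverse x = -(x*a*inverse x)" by simp
    then show "- a \<in> {z. x * z * inverse x \<in> Y}" using a assms(2)
      by (simp add: division_subring_def)
    show "inverse a \<in> {z. x * z * inverse x \<in> Y}" using a assms(2) conj_inv[OF assms(1), of a]
      by (simp add: division_subring_def)
  qed
  then have "gen X \<subseteq> {z. x*z*inverse x \<in> Y}" using assms(3) by (intro gen_min) auto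
  then show ?thesis by auto
qed

definition Cent :: "'a::division_ring set \<Rightarrow> 'a set" where
  "Cent X = {z. \<forall>x\<in>X. z*x = x*z}"

lemma inv_comm:
  fixes z x :: "'a::division_ring"
  assumes "z*x = x*z" shows "inverse z * x = x * inverse z"
proof (cases "z = 0")
  case False
  have "inverse z * x = inverse z * (x * z) * inverse z" using False by (simp add: mult.assoc)
  also have "\<dots> = inverse z * (z * x) * inverse z" using assms by simp
  also have "\<dots> = x * inverse z" using False by (simp add: mult.assoc[symmetric])
  finally show ?thesis .
qed simp

lemma Cent_ds: "ds (Cent X)"
  unfolding division_subring_def Cent_def
proof (intro conjI ballI allI CollectI)
  fix x y z assume x: "x \<in> {z. \<forall>x\<in>X. z * x = x * z}" and y: "y \<in> {z. \<forall>x\<in>X. z * x = x * z}" and z: "z \<in> X"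
  show "(x + y) * z = z * (x + y)" using x y z by (simp add: algebra_simps)
  have "x * y * z = x * (z * y)" using y z by (simp add: mult.assoc)
  also have "\<dots> = z * (x * y)" using x z by (simp add: mult.assoc[symmetric])
  finally show "x * y * z = z * (x * y)" .
next
  fix x z assume x: "x \<in> {z. \<forall>x\<in>X. z * x = x * z}" and z: "z \<in> X"
  show "- x * z = z * - x" using x z by simp
  show "inverse x * z = z * inverse x" using x z by (simp add: inv_comm)
qed auto

lemma comm_gen:
  fixes X :: "'a::division_ring set"
  assumes "\<forall>x\<in>X. \<forall>y\<in>X. x*y = y*x"
  shows "\<forall>u\<in>gen X. \<forall>v\<in>gen X. u*v = v*u"
proof -
  have "X \<subseteq> Cent (Cent X)" using assms unfolding Cent_def by auto
  then have g: "gen X \<subseteq> Cent (Cent X)" by (intro gen_min Cent_ds)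
  have XC: "X \<subseteq> Cent X" using assms unfolding Cent_def by auto
  show ?thesis
  proof (intro ballI)
    fix u v assume "u \<in> gen X" "v \<in> gen X"
    then have u: "u \<in> Cent (Cent X)" and v: "v \<in> Cent (Cent X)" using g by auto
    have "v \<in> Cent X" using v XC unfolding Cent_def by auto
    then show "u*v = v*u" using u unfolding Cent_def by auto
  qed
qed

lemma trick:
  fixes x y c d :: "'a::division_ring"
  assumes e1: "x*y = c*y*x" and e2: "x*(y+1) = d*(y+1)*x" and cx: "c*x = x*c" and dx: "d*x = x*d"
  shows "x*y = y*x"
proof (cases "x = 0")
  case False
  have "(c*y + 1)*x = (d*y + d)*x" using e1 e2 by (simp add: algebra_simps)
  then have eq: "c*y + 1 = d*y + d" using False by simp
  show ?thesis
  proof (cases "c = d")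
    case True
    then have "d = 1" using eq by simp
    then show ?thesis using e1 True by simp
  next
    case False
    have "(c - d)*y = d - 1" using eq by (simp add: algebra_simps)
    then have y: "y = inverse (c - d) * (d - 1)" using False
    proof -
      have "inverse (c - d) * ((c - d) * y) = y" using False by (simp add: mult.assoc[symmetric])
      then show ?thesis using \<open>(c - d)*y = d - 1\<close> by simp
    qed
    have "inverse (c - d) * x = x * inverse (c - d)" using cx dx by (intro inv_comm) (simp add: algebra_simps)
    moreover have "(d - 1) * x = x * (d - 1)" using dx by (simp add: algebra_simps)
    ultimately show ?thesis unfolding y by (metis mult.assoc)
  qed
qed simp



lemma comm_eq:
  fixes x y :: "'a::division_ring"
  assumes "x \<noteq> 0" "y \<noteq> 0"
  shows "(x*y*inverse x*inverse y)*y*x = x*y"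
proof -
  have "(x*y*inverse x*inverse y)*y*x = x*y*inverse x*(inverse y*y)*x" by (simp add: mult.assoc)
  also have "\<dots> = x*y*(inverse x*x)" using assms by (simp add: mult.assoc)
  also have "\<dots> = x*y" using assms by simp
  finally show ?thesis .
qed

lemma conj_mult:
  fixes b x y :: "'a::division_ring"
  assumes "b \<noteq> 0"
  shows "(b*x*inverse b)*(b*y*inverse b) = b*(x*y)*inverse b"
proof -
  have "(b*x*inverse b)*(b*y*inverse b) = b*x*(inverse b*b)*y*inverse b" by (simp add: mult.assoc)
  also have "\<dots> = b*(x*y)*inverse b" using assms by (simp add: mult.assoc)
  finally show ?thesis .
qed

lemma conj_comm:
  fixes b x y :: "'a::division_ring"
  assumes "b \<noteq> 0"
  shows "b*(x*y*inverse x*inverse y)*inverse b =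
    (b*x*inverse b)*(b*y*inverse b)*inverse (b*x*inverse b)*inverse (b*y*inverse b)"
proof -
  have i1: "inverse (b*x*inverse b) = b*inverse x*inverse b" using conj_inv[OF assms, of x] by simp
  have i2: "inverse (b*y*inverse b) = b*inverse y*inverse b" using conj_inv[OF assms, of y] by simp
  show ?thesis unfolding i1 i2 conj_mult[OF assms] by simp
qed

lemma CBH:
  fixes R S :: "'a::division_ring set"
  assumes dR: "ds R" and dS: "ds S" and SR: "S \<subseteq> R"
    and norm: "\<forall>b\<in>R. b \<notin> S \<longrightarrow> (\<forall>a\<in>S. b*a*inverse b \<in> S)"
  shows "S = R \<or> (\<forall>a\<in>S. \<forall>r\<in>R. a*r = r*a)"
proof (cases "S = R")
  case False
  then obtain b0 where b0: "b0 \<in> R" "b0 \<notin> S" using SR by auto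
  have S0: "0 \<in> S" "1 \<in> S" and Sadd: "\<And>x y. x \<in> S \<Longrightarrow> y \<in> S \<Longrightarrow> x + y \<in> S"
    and Smul: "\<And>x y. x \<in> S \<Longrightarrow> y \<in> S \<Longrightarrow> x * y \<in> S"
    and Sneg: "\<And>x. x \<in> S \<Longrightarrow> -x \<in> S" and Sinv: "\<And>x. x \<in> S \<Longrightarrow> inverse x \<in> S"
    using dS unfolding division_subring_def by auto
  have Radd: "\<And>x y. x \<in> R \<Longrightarrow> y \<in> R \<Longrightarrow> x + y \<in> R" and R1: "1 \<in> R"
    using dR unfolding division_subring_def by auto
  have claim: "a*b = b*a" if b: "b \<in> R" "b \<notin> S" and a: "a \<in> S" for a b
  proof -
    have b0': "b \<noteq> 0" using b S0 by auto
    have b1R: "1 + b \<in> R" using b R1 Radd by auto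
    have b1S: "1 + b \<notin> S"
    proof
      assume "1 + b \<in> S"
      then have "-1 + (1 + b) \<in> S" using Sadd Sneg S0 by blast
      then show False using b by simp
    qed
    have b1: "1 + b \<noteq> 0" using b1S S0 by auto
    define a1 where "a1 = b*a*inverse b"
    define a2 where "a2 = (1+b)*a*inverse (1+b)"
    have a1S: "a1 \<in> S" using norm b a unfolding a1_def by auto
    have a2S: "a2 \<in> S" using norm b1R b1S a unfolding a2_def by auto
    have e1: "b*a = a1*b" unfolding a1_def using b0' by (simp add: mult.assoc)
    have e2: "(1+b)*a = a2*(1+b)" unfolding a2_def using b1 by (simp add: mult.assoc)
    have "a + a1*b = a2 + a2*b" using e1 e2 by (simp add: distrib_left distrib_right)
    then have e3: "(a1 - a2)*b = a2 - a" by (simp add: left_diff_distrib algebra_simps)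
    have "a1 = a2"
    proof (rule ccontr)
      assume ne: "a1 \<noteq> a2"
      have "b = inverse (a1 - a2) * (a2 - a)"
      proof -
        have "inverse (a1 - a2) * ((a1 - a2) * b) = b" using ne by (simp add: mult.assoc[symmetric])
        then show ?thesis using e3 by simp
      qed
      moreover have "inverse (a1 - a2) * (a2 - a) \<in> S"
        using a1S a2S a Sadd Sneg Sinv Smul by (metis diff_conv_add_uminus)
      ultimately show False using b by simp
    qed
    then have "a2 = a" using e3 by simp
    then have "a1 = a" using \<open>a1 = a2\<close> by simp
    then show ?thesis using e1 by simp
  qed
  have "\<forall>a\<in>S. \<forall>r\<in>R. a*r = r*a"
  proof (intro ballI)
    fix a r assume a: "a \<in> S" and r: "r \<in> R"
    show "a*r = r*a"
    proof (cases "r \<in> S")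
      case False
      then show ?thesis using claim r a by auto
    next
      case True
      have "r + b0 \<in> R" using Radd r b0 by auto
      moreover have "r + b0 \<notin> S"
      proof
        assume "r + b0 \<in> S"
        then have "-r + (r + b0) \<in> S" using Sadd Sneg True by blast
        then show False using b0 by simp
      qed
      ultimately have "a*(r+b0) = (r+b0)*a" using claim a by auto
      moreover have "a*b0 = b0*a" using claim b0 a by auto
      ultimately show ?thesis by (simp add: algebra_simps)
    qed
  qed
  then show ?thesis by blast
qed simp

lemma HR:
  fixes R :: "'a::division_ring set"
  assumes dR: "ds R"
    and comm: "\<forall>x\<in>R-{0}. \<forall>y\<in>R-{0}. \<forall>u\<in>R-{0}. \<forall>v\<in>R-{0}.
       (x*y*inverse x*inverse y)*(u*v*inverse u*inverse v) = (u*v*inverse u*inverse v)*(x*y*inverse x*inverse y)"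
  shows "\<forall>x\<in>R. \<forall>y\<in>R. x*y = y*x"
proof -
  have R0: "0 \<in> R" "1 \<in> R" and Radd: "\<And>x y. x \<in> R \<Longrightarrow> y \<in> R \<Longrightarrow> x + y \<in> R"
    and Rmul: "\<And>x y. x \<in> R \<Longrightarrow> y \<in> R \<Longrightarrow> x * y \<in> R"
    and Rinv: "\<And>x. x \<in> R \<Longrightarrow> inverse x \<in> R"
    using dR unfolding division_subring_def by auto
  define X where "X = {x*y*inverse x*inverse y | x y. x \<in> R-{0} \<and> y \<in> R-{0}}"
  have XR: "X \<subseteq> R" unfolding X_def using Rmul Rinv by auto
  have TR: "gen X \<subseteq> R" using gen_min[OF dR XR] .
  have Xc: "\<forall>p\<in>X. \<forall>q\<in>X. p*q = q*p"
  proof (intro ballI)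
    fix p q assume "p \<in> X" "q \<in> X"
    then obtain x y u v where "p = x*y*inverse x*inverse y" "x \<in> R-{0}" "y \<in> R-{0}"
       "q = u*v*inverse u*inverse v" "u \<in> R-{0}" "v \<in> R-{0}" unfolding X_def by blast
    then show "p*q = q*p" using comm by simp
  qed
  have norm: "\<forall>b\<in>R. b \<notin> gen X \<longrightarrow> (\<forall>a\<in>gen X. b*a*inverse b \<in> gen X)"
  proof (rule ballI, rule impI)
    fix b assume b: "b \<in> R" "b \<notin> gen X"
    have b0: "b \<noteq> 0" using b gen_ds[of X] unfolding division_subring_def by auto
    have "\<forall>y\<in>X. b*y*inverse b \<in> gen X"
    proof
      fix p assume "p \<in> X"
      then obtain x y where p: "p = x*y*inverse x*inverse y" "x \<in> R-{0}" "y \<in> R-{0}"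
        unfolding X_def by auto
      have "b*x*inverse b \<in> R-{0}" "b*y*inverse b \<in> R-{0}"
        using p b b0 Rmul Rinv by auto
      then have "b*p*inverse b \<in> X" unfolding X_def p(1) conj_comm[OF b0]
        by (intro CollectI exI conjI) (rule refl, assumption+)
      then show "b*p*inverse b \<in> gen X" using gen_incl by auto
    qed
    then show "\<forall>a\<in>gen X. b*a*inverse b \<in> gen X" using conj_gen[OF b0 gen_ds] by blast
  qed
  from CBH[OF dR gen_ds TR norm]
  show ?thesis
  proof
    assume "gen X = R"
    then show ?thesis using comm_gen[OF Xc] by simp
  next
    assume Z: "\<forall>a\<in>gen X. \<forall>r\<in>R. a*r = r*a"
    then have XZ: "\<forall>a\<in>X. \<forall>r\<in>R. a*r = r*a" using gen_incl by blast
    show ?thesis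
    proof (intro ballI)
      fix x y assume x: "x \<in> R" and y: "y \<in> R"
      show "x*y = y*x"
      proof (cases "x = 0 \<or> y = 0 \<or> y + 1 = 0")
        case True
        then show ?thesis
        proof (elim disjE)
          assume "y + 1 = 0" then have "y = -1" by (simp add: add_eq_0_iff2)
          then show ?thesis by simp
        qed auto
      next
        case False
        then have nz: "x \<noteq> 0" "y \<noteq> 0" "y + 1 \<noteq> 0" by auto
        have y1: "y + 1 \<in> R" using y R0 Radd by auto
        define c where "c = x*y*inverse x*inverse y"
        define d where "d = x*(y+1)*inverse x*inverse (y+1)"
        have cX: "c \<in> X" unfolding c_def X_def using x y nz by blast
        have dX: "d \<in> X" unfolding d_def X_def using x y1 nz by blast
        show ?thesis
        proof (rule trick)
          show "x*y = c*y*x" unfolding c_def using comm_eq[OF nz(1,2)] by simp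
          show "x*(y+1) = d*(y+1)*x" unfolding d_def using comm_eq[OF nz(1,3)] by simp
          show "c*x = x*c" using XZ cX x by auto
          show "d*x = x*d" using XZ dX x by auto
        qed
      qed
    qed
  qed
qed



lemma max_grp: "maximal_subgroup M \<Longrightarrow> grp M"
  unfolding maximal_subgroup_def subgroup_D_iff by simp

lemma max_max:
  assumes "maximal_subgroup M" "grp H" "M \<subseteq> H"
  shows "H = -{0} \<or> H = M"
  using assms unfolding maximal_subgroup_def subgroup_D_iff by auto

lemma normal_iff:
  fixes M A :: "'a::division_ring set"
  assumes gM: "grp M"
  shows "A \<lhd> Dstar\<lparr>carrier:=M\<rparr> \<longleftrightarrow> grp A \<and> A \<subseteq> M \<and> (\<forall>m\<in>M. \<forall>a\<in>A. m*a*inverse m \<in> A)"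
proof -
  have sM: "subgroup M (Dstar::'a monoid)" using gM subgroup_D_iff by blast
  have G: "group (Dstar\<lparr>carrier:=M\<rparr>)" using subgroup.subgroup_is_group[OF sM group_D] .
  have iv: "inv\<^bsub>Dstar\<lparr>carrier := M\<rparr>\<^esub> m = inverse m" if "m \<in> M" for m
    using that gM by (intro inv_sub) (auto simp: grp_def)
  show ?thesis
    unfolding group.normal_inv_iff[OF G] subgroup_sub_iff[OF gM]
  proof (rule iffI)
    assume h: "grp A \<and> A \<subseteq> M \<and> (\<forall>m\<in>M. \<forall>a\<in>A. m*a*inverse m \<in> A)"
    then show "(grp A \<and> A \<subseteq> M) \<and> (\<forall>x\<in>carrier (Dstar\<lparr>carrier := M\<rparr>). \<forall>h\<in>A.
      x \<otimes>\<^bsub>Dstar\<lparr>carrier := M\<rparr>\<^esub> h \<otimes>\<^bsub>Dstar\<lparr>carrier := M\<rparr>\<^esub> inv\<^bsub>Dstar\<lparr>carrier := M\<rparr>\<^esub> x \<in> A)"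
      by (simp add: iv)
  next
    assume h: "(grp A \<and> A \<subseteq> M) \<and> (\<forall>x\<in>carrier (Dstar\<lparr>carrier := M\<rparr>). \<forall>h\<in>A.
      x \<otimes>\<^bsub>Dstar\<lparr>carrier := M\<rparr>\<^esub> h \<otimes>\<^bsub>Dstar\<lparr>carrier := M\<rparr>\<^esub> inv\<^bsub>Dstar\<lparr>carrier := M\<rparr>\<^esub> x \<in> A)"
    moreover have "\<forall>m\<in>M. \<forall>a\<in>A. m*a*inverse m \<in> A" using h by (simp add: iv)
    ultimately show "grp A \<and> A \<subseteq> M \<and> (\<forall>m\<in>M. \<forall>a\<in>A. m*a*inverse m \<in> A)" by simp
  qed
qed

lemma com_derived:
  fixes M :: "'a::division_ring set"
  assumes "grp M" "x \<in> M" "y \<in> M"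
  shows "x*y*inverse x*inverse y \<in> derived Dstar M"
proof -
  have "x \<noteq> 0" "y \<noteq> 0" using assms by (auto simp: grp_def)
  then have e: "x*y*inverse x*inverse y = x \<otimes>\<^bsub>Dstar\<^esub> y \<otimes>\<^bsub>Dstar\<^esub> inv\<^bsub>Dstar\<^esub> x \<otimes>\<^bsub>Dstar\<^esub> inv\<^bsub>Dstar\<^esub> y"
    by (simp add: inv_D)
  have "x*y*inverse x*inverse y \<in> derived_set Dstar M"
    unfolding e using assms(2,3) by blast
  then show ?thesis unfolding derived_def by (rule generate.incl)
qed

lemma KL:
  fixes M S :: "'a::division_ring set"
  assumes maxM: "maximal_subgroup M" and dS: "ds S"
    and nS: "\<forall>m\<in>M. \<forall>s\<in>S. m*s*inverse m \<in> S"
  shows "S = UNIV \<or> S \<subseteq> center \<or> S - {0} \<subseteq> M"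
proof -
  have gM: "grp M" using max_grp[OF maxM] .
  have S0: "0 \<in> S" "1 \<in> S" and Smul: "\<And>x y. x \<in> S \<Longrightarrow> y \<in> S \<Longrightarrow> x * y \<in> S"
    and Sinv: "\<And>x. x \<in> S \<Longrightarrow> inverse x \<in> S"
    using dS unfolding division_subring_def by auto
  define H where "H = {x. x \<noteq> 0 \<and> (\<forall>s\<in>S. x*s*inverse x \<in> S) \<and> (\<forall>s\<in>S. inverse x*s*x \<in> S)}"
  have gH: "grp H" unfolding grp_def
  proof (intro conjI ballI)
    show "H \<subseteq> -{0}" unfolding H_def by auto
    show "1 \<in> H" unfolding H_def by simp
  next
    fix x y assume x: "x \<in> H" and y: "y \<in> H"
    have nz: "x \<noteq> 0" "y \<noteq> 0" using x y unfolding H_def by auto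
    have "x*y*s*inverse (x*y) \<in> S" if "s \<in> S" for s
    proof -
      have "x*y*s*inverse (x*y) = x*(y*s*inverse y)*inverse x"
        using nz by (simp add: nonzero_inverse_mult_distrib mult.assoc)
      then show ?thesis using x y that unfolding H_def by auto
    qed
    moreover have "inverse (x*y)*s*(x*y) \<in> S" if "s \<in> S" for s
    proof -
      have "inverse (x*y)*s*(x*y) = inverse y*(inverse x*s*x)*y"
        using nz by (simp add: nonzero_inverse_mult_distrib mult.assoc)
      then show ?thesis using x y that unfolding H_def by auto
    qed
    ultimately show "x*y \<in> H" unfolding H_def using nz by auto
  next
    fix x assume x: "x \<in> H"
    then show "inverse x \<in> H" unfolding H_def by auto
  qed
  have MH: "M \<subseteq> H"
  proof
    fix m assume m: "m \<in> M"
    then have "inverse m \<in> M" "m \<noteq> 0" using gM by (auto simp: grp_def)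
    moreover have "\<forall>s\<in>S. inverse m*s*m \<in> S"
    proof
      fix s assume "s \<in> S"
      then have "inverse m*s*inverse (inverse m) \<in> S" using nS \<open>inverse m \<in> M\<close> by blast
      then show "inverse m*s*m \<in> S" by simp
    qed
    ultimately show "m \<in> H" unfolding H_def using nS m by blast
  qed
  from max_max[OF maxM gH MH] show ?thesis
  proof
    assume H: "H = -{0}"
    have "\<forall>b\<in>UNIV. b \<notin> S \<longrightarrow> (\<forall>a\<in>S. b*a*inverse b \<in> S)"
    proof (intro ballI impI)
      fix b a assume "b \<notin> S" "a \<in> S"
      then have "b \<in> H" using H S0 by auto
      then show "b*a*inverse b \<in> S" using \<open>a \<in> S\<close> unfolding H_def by auto
    qed
    from CBH[OF ds_UNIV dS subset_UNIV this] show ?thesis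
    proof
      assume "S = UNIV" then show ?thesis by blast
    next
      assume "\<forall>a\<in>S. \<forall>r\<in>UNIV. a*r = r*a"
      then have "S \<subseteq> center" unfolding center_def by blast
      then show ?thesis by blast
    qed
  next
    assume H: "H = M"
    have "S - {0} \<subseteq> H"
    proof
      fix x assume x: "x \<in> S - {0}"
      have ix: "inverse x \<in> S" using Sinv x by blast
      have "\<forall>s\<in>S. x*s*inverse x \<in> S" using Smul x ix by blast
      moreover have "\<forall>s\<in>S. inverse x*s*x \<in> S" using Smul x ix by blast
      ultimately show "x \<in> H" unfolding H_def using x by blast
    qed
    then show ?thesis using H by auto
  qed
qed



lemma HR_M:
  fixes M R :: "'a::division_ring set"
  assumes gM: "grp M" and meta: "metabelian Dstar M" and dR: "ds R" and RM: "R - {0} \<subseteq> M"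
  shows "\<forall>x\<in>R. \<forall>y\<in>R. x*y = y*x"
proof (rule HR[OF dR], intro ballI)
  fix x y u v assume "x \<in> R-{0}" "y \<in> R-{0}" "u \<in> R-{0}" "v \<in> R-{0}"
  then have "x \<in> M" "y \<in> M" "u \<in> M" "v \<in> M" using RM by auto
  then have "x*y*inverse x*inverse y \<in> derived Dstar M" "u*v*inverse u*inverse v \<in> derived Dstar M"
    using com_derived[OF gM] by auto
  then show "(x*y*inverse x*inverse y)*(u*v*inverse u*inverse v) = (u*v*inverse u*inverse v)*(x*y*inverse x*inverse y)"
    using meta unfolding metabelian_def abelian_set_def by simp
qed

definition maxab :: "'a::division_ring set \<Rightarrow> 'a set \<Rightarrow> bool" where
  "maxab M A \<longleftrightarrow> grp A \<and> A \<subseteq> M \<and> (\<forall>m\<in>M. \<forall>a\<in>A. m*a*inverse m \<in> A) \<and> (\<forall>x\<in>A. \<forall>y\<in>A. x*y=y*x) \<and>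
     (\<forall>B. grp B \<and> B \<subseteq> M \<and> (\<forall>m\<in>M. \<forall>b\<in>B. m*b*inverse m \<in> B) \<and> (\<forall>x\<in>B. \<forall>y\<in>B. x*y=y*x) \<and> A \<subseteq> B \<longrightarrow> B = A)"

lemma maxab_from:
  fixes M A :: "'a::division_ring set"
  assumes gM: "grp M" and "max_abelian_normal Dstar M A"
  shows "maxab M A"
  using assms(2) unfolding max_abelian_normal_def maxab_def normal_iff[OF gM] abelian_set_def
  by simp

lemma cen_swap:
  fixes w a b :: "'a::division_ring"
  assumes "w \<in> center" shows "a*(w*b) = w*(a*b)"
proof -
  have "a*(w*b) = (a*w)*b" by (simp add: mult.assoc)
  also have "\<dots> = (w*a)*b" using assms unfolding center_def by simp
  finally show ?thesis by (simp add: mult.assoc)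
qed

lemma cen_prod:
  fixes w a b z :: "'a::division_ring"
  assumes "w \<in> center" shows "(z*a)*(w*b) = (z*w)*(a*b)"
proof -
  have "(z*a)*(w*b) = z*(a*(w*b))" by (simp add: mult.assoc)
  also have "\<dots> = z*(w*(a*b))" using cen_swap[OF assms] by simp
  finally show ?thesis by (simp add: mult.assoc)
qed

lemma cent_A:
  fixes M A :: "'a::division_ring set"
  assumes gM: "grp M" and mA: "maxab M A"
  shows "center \<inter> M \<subseteq> A"
proof -
  have gA: "grp A" and AM: "A \<subseteq> M" and nA: "\<forall>m\<in>M. \<forall>a\<in>A. m*a*inverse m \<in> A"
    and abA: "\<forall>x\<in>A. \<forall>y\<in>A. x*y=y*x"
    and mx: "\<And>B. grp B \<Longrightarrow> B \<subseteq> M \<Longrightarrow> (\<forall>m\<in>M. \<forall>b\<in>B. m*b*inverse m \<in> B) \<Longrightarrow> (\<forall>x\<in>B. \<forall>y\<in>B. x*y=y*x) \<Longrightarrow> A \<subseteq> B \<Longrightarrow> B = A"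
    using mA unfolding maxab_def by auto
  have cz: "z*x = x*z" if "z \<in> center" for z x using that unfolding center_def by simp
  define B where "B = {z*a | z a. z \<in> center \<inter> M \<and> a \<in> A}"
  have Mm: "x*y \<in> M" if "x \<in> M" "y \<in> M" for x y using gM that unfolding grp_def by auto
  have Mi: "inverse x \<in> M" if "x \<in> M" for x using gM that unfolding grp_def by auto
  have Mz: "x \<noteq> 0" if "x \<in> M" for x using gM that unfolding grp_def by auto
  have Am: "x*y \<in> A" if "x \<in> A" "y \<in> A" for x y using gA that unfolding grp_def by auto
  have Ai: "inverse x \<in> A" if "x \<in> A" for x using gA that unfolding grp_def by auto
  have A1: "1 \<in> A" using gA unfolding grp_def by auto
  have M1: "1 \<in> M" using gM unfolding grp_def by auto
  have c1: "1 \<in> center" unfolding center_def by auto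
  have cm: "z*w \<in> center" if "z \<in> center" "w \<in> center" for z w
  proof -
    have "z*w*x = x*(z*w)" for x
    proof -
      have "z*w*x = z*(x*w)" using that(2) unfolding center_def by (simp add: mult.assoc)
      also have "\<dots> = (z*x)*w" by (simp add: mult.assoc)
      also have "\<dots> = (x*z)*w" using that(1) unfolding center_def by simp
      also have "\<dots> = x*(z*w)" by (simp add: mult.assoc)
      finally show ?thesis .
    qed
    then show ?thesis unfolding center_def by simp
  qed
  have ci: "inverse z \<in> center" if "z \<in> center" for z
    using that inv_comm unfolding center_def by blast
  have BM: "B \<subseteq> M" unfolding B_def using AM Mm by auto
  have gB: "grp B" unfolding grp_def
  proof (intro conjI ballI)
    show "B \<subseteq> -{0}" using BM Mz by auto
    show "1 \<in> B" unfolding B_def using c1 M1 A1 by (intro CollectI exI[of _ 1]) simp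
  next
    fix x y assume "x \<in> B" "y \<in> B"
    then obtain z a w b where x: "x = z*a" "z \<in> center \<inter> M" "a \<in> A"
      and y: "y = w*b" "w \<in> center \<inter> M" "b \<in> A" unfolding B_def by blast
    have "x*y = (z*w)*(a*b)" unfolding x y using cen_prod y(2) by blast
    moreover have "z*w \<in> center \<inter> M" using x y cm Mm by auto
    moreover have "a*b \<in> A" using x y Am by auto
    ultimately show "x*y \<in> B" unfolding B_def by blast
  next
    fix x assume "x \<in> B"
    then obtain z a where x: "x = z*a" "z \<in> center \<inter> M" "a \<in> A" unfolding B_def by blast
    have "z \<noteq> 0" "a \<noteq> 0" using x AM Mz by auto
    then have "inverse x = inverse a * inverse z" unfolding x(1)
      by (rule nonzero_inverse_mult_distrib)
    also have "\<dots> = inverse z * inverse a"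
    proof -
      have "inverse z \<in> center" using ci x(2) by auto
      from cz[OF this, of "inverse a"] show ?thesis by (rule sym)
    qed
    finally have "inverse x = inverse z * inverse a" .
    moreover have "inverse z \<in> center \<inter> M" using ci Mi x by auto
    moreover have "inverse a \<in> A" using Ai x by auto
    ultimately show "inverse x \<in> B" unfolding B_def by blast
  qed
  have nB: "\<forall>m\<in>M. \<forall>b\<in>B. m*b*inverse m \<in> B"
  proof (intro ballI)
    fix m x assume m: "m \<in> M" and "x \<in> B"
    then obtain z a where x: "x = z*a" "z \<in> center \<inter> M" "a \<in> A" unfolding B_def by blast
    have "m*x*inverse m = m*(z*(a*inverse m))" unfolding x(1) by (simp add: mult.assoc)
    also have "\<dots> = z*(m*(a*inverse m))" using cen_swap x(2) by blast
    finally have "m*x*inverse m = z*(m*a*inverse m)" by (simp add: mult.assoc)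
    then show "m*x*inverse m \<in> B" unfolding B_def using x nA m by blast
  qed
  have abB: "\<forall>x\<in>B. \<forall>y\<in>B. x*y=y*x"
  proof (intro ballI)
    fix x y assume "x \<in> B" "y \<in> B"
    then obtain z a w b where x: "x = z*a" "z \<in> center \<inter> M" "a \<in> A"
      and y: "y = w*b" "w \<in> center \<inter> M" "b \<in> A" unfolding B_def by blast
    have "x*y = (z*w)*(a*b)" unfolding x y using cen_prod y(2) by blast
    moreover have "y*x = (w*z)*(b*a)" unfolding x y using cen_prod x(2) by blast
    moreover have "a*b = b*a" using abA x y by auto
    moreover have "z*w = w*z" using cz x(2) by auto
    ultimately show "x*y = y*x" by simp
  qed
  have AB: "A \<subseteq> B"
  proof
    fix a assume "a \<in> A"
    then show "a \<in> B" unfolding B_def using c1 M1 by (intro CollectI exI[of _ 1] exI[of _ a]) simp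
  qed
  have "B = A" using mx[OF gB BM nB abB AB] .
  moreover have "center \<inter> M \<subseteq> B"
  proof
    fix z assume "z \<in> center \<inter> M"
    then show "z \<in> B" unfolding B_def using A1 by (intro CollectI exI[of _ z] exI[of _ 1]) simp
  qed
  ultimately show ?thesis by simp
qed

lemma field_A:
  fixes M A K :: "'a::division_ring set"
  assumes gM: "grp M" and mA: "maxab M A" and dK: "ds K" and KM: "K - {0} \<subseteq> M"
    and cK: "\<forall>x\<in>K. \<forall>y\<in>K. x*y = y*x" and nK: "\<forall>m\<in>M. \<forall>k\<in>K. m*k*inverse m \<in> K"
    and AK: "A \<subseteq> K"
  shows "K - {0} = A"
proof -
  have AM: "A \<subseteq> M"
    and mx: "\<And>B. grp B \<Longrightarrow> B \<subseteq> M \<Longrightarrow> (\<forall>m\<in>M. \<forall>b\<in>B. m*b*inverse m \<in> B) \<Longrightarrow> (\<forall>x\<in>B. \<forall>y\<in>B. x*y=y*x) \<Longrightarrow> A \<subseteq> B \<Longrightarrow> B = A"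
    using mA unfolding maxab_def by auto
  have Mz: "x \<noteq> 0" if "x \<in> M" for x using gM that unfolding grp_def by auto
  have K1: "1 \<in> K" and Km: "\<And>x y. x \<in> K \<Longrightarrow> y \<in> K \<Longrightarrow> x*y \<in> K" and Ki: "\<And>x. x \<in> K \<Longrightarrow> inverse x \<in> K"
    using dK unfolding division_subring_def by auto
  have g: "grp (K - {0})" unfolding grp_def using K1 Km Ki by auto
  have n: "\<forall>m\<in>M. \<forall>b\<in>K-{0}. m*b*inverse m \<in> K-{0}" using nK Mz by auto
  have c': "\<forall>x\<in>K-{0}. \<forall>y\<in>K-{0}. x*y=y*x" using cK by blast
  have a': "A \<subseteq> K - {0}" using AK AM Mz by blast
  show ?thesis using mx[OF g KM n c' a'] .
qed



lemma norm_gen: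
  fixes M Y :: "'a::division_ring set"
  assumes gM: "grp M" and h: "\<forall>m\<in>M. \<forall>y\<in>Y. m*y*inverse m \<in> gen (center \<union> Y)"
  shows "\<forall>m\<in>M. \<forall>z\<in>gen (center \<union> Y). m*z*inverse m \<in> gen (center \<union> Y)"
proof
  fix m assume m: "m \<in> M"
  then have m0: "m \<noteq> 0" using gM unfolding grp_def by auto
  have "\<forall>y\<in>center \<union> Y. m*y*inverse m \<in> gen (center \<union> Y)"
  proof
    fix y assume y: "y \<in> center \<union> Y"
    show "m*y*inverse m \<in> gen (center \<union> Y)"
    proof (cases "y \<in> center")
      case True
      then have "m*y = y*m" unfolding center_def by simp
      then have "m*y*inverse m = y" using m0 by (simp add: mult.assoc)
      then show ?thesis using True gen_incl[of "center \<union> Y"] by auto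
    next
      case False
      then show ?thesis using h m y by auto
    qed
  qed
  then show "\<forall>z\<in>gen (center \<union> Y). m*z*inverse m \<in> gen (center \<union> Y)"
    using conj_gen[OF m0 gen_ds] by blast
qed

lemma comm_cen:
  fixes Y :: "'a::division_ring set"
  assumes "\<forall>x\<in>Y. \<forall>y\<in>Y. x*y = y*x"
  shows "\<forall>x\<in>gen (center \<union> Y). \<forall>y\<in>gen (center \<union> Y). x*y = y*x"
proof (rule comm_gen)
  show "\<forall>x\<in>center \<union> Y. \<forall>y\<in>center \<union> Y. x*y = y*x"
    using assms unfolding center_def by auto
qed

lemma comm_eq2:
  fixes m n :: "'a::division_ring"
  assumes "n \<noteq> 0"
  shows "(m*n*inverse m*inverse n)*n = m*n*inverse m"
proof -
  have "(m*n*inverse m*inverse n)*n = m*n*inverse m*(inverse n*n)" by (simp add: mult.assoc)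
  then show ?thesis using assms by simp
qed

lemma central_of:
  fixes c :: "'a::division_ring" and Y :: "'a set"
  assumes "gen (center \<union> Y) = UNIV" "\<forall>y\<in>Y. c*y = y*c"
  shows "c \<in> center"
proof -
  have "center \<union> Y \<subseteq> Cent {c}" using assms(2) unfolding Cent_def center_def by auto
  then have "gen (center \<union> Y) \<subseteq> Cent {c}" by (intro gen_min Cent_ds)
  then have "x*c = c*x" for x using assms(1) unfolding Cent_def by auto
  then show ?thesis unfolding center_def by simp
qed

theorem proposition2p7:
  fixes M A N :: "'a::division_ring set"
  assumes noncomm: "\<exists>x y :: 'a. x * y \<noteq> y * x"
    and maxM: "maximal_subgroup M"
    and irrM: "irreducible_subgroup M"
    and metaM: "metabelian Dstar M"
    and locM: "locally_solvable Dstar M"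
    and maxA: "max_abelian_normal Dstar M A"
    and subN: "subgroup N (Dstar\<lparr>carrier := M\<rparr>)"
    and AN: "A \<subset> N"
  shows "irreducible_subgroup N"
proof -
  have gM: "grp M" using max_grp[OF maxM] .
  have mA: "maxab M A" using maxab_from[OF gM maxA] .
  have gA: "grp A" and AM: "A \<subseteq> M" and nA: "\<forall>m\<in>M. \<forall>a\<in>A. m*a*inverse m \<in> A"
    and abA: "\<forall>x\<in>A. \<forall>y\<in>A. x*y=y*x"
    using mA unfolding maxab_def by auto
  have gN: "grp N" and NM: "N \<subseteq> M" using subN subgroup_sub_iff[OF gM] by auto
  have Mm: "x*y \<in> M" if "x \<in> M" "y \<in> M" for x y using gM that unfolding grp_def by auto
  have Mi: "inverse x \<in> M" if "x \<in> M" for x using gM that unfolding grp_def by auto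
  have Mz: "x \<noteq> 0" if "x \<in> M" for x using gM that unfolding grp_def by auto
  have Am: "x*y \<in> A" if "x \<in> A" "y \<in> A" for x y using gA that unfolding grp_def by auto
  have Ai: "inverse x \<in> A" if "x \<in> A" for x using gA that unfolding grp_def by auto
  have Nm: "x*y \<in> N" if "x \<in> N" "y \<in> N" for x y using gN that unfolding grp_def by auto
  have cA: "center \<inter> M \<subseteq> A" using cent_A[OF gM mA] .
  have nc: "\<not> (\<forall>x\<in>(UNIV::'a set). \<forall>y\<in>UNIV. x*y = y*x)" using noncomm by auto
  have cen: "z*x = x*z" if "z \<in> center" for z x using that unfolding center_def by simp
  have dsops: "0 \<in> S" "1 \<in> S" "\<And>x y. x \<in> S \<Longrightarrow> y \<in> S \<Longrightarrow> x + y \<in> S"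
    "\<And>x y. x \<in> S \<Longrightarrow> y \<in> S \<Longrightarrow> x * y \<in> S" "\<And>x. x \<in> S \<Longrightarrow> inverse x \<in> S"
    if "ds S" for S :: "'a set" using that unfolding division_subring_def by auto
  define X where "X = {x*y*inverse x*inverse y | x y. x \<in> M \<and> y \<in> M}"
  have XM: "X \<subseteq> M" unfolding X_def using Mm Mi by auto
  have Xc: "\<forall>p\<in>X. \<forall>q\<in>X. p*q = q*p"
  proof (intro ballI)
    fix p q assume "p \<in> X" "q \<in> X"
    then obtain x y u v where "p = x*y*inverse x*inverse y" "x \<in> M" "y \<in> M"
       "q = u*v*inverse u*inverse v" "u \<in> M" "v \<in> M" unfolding X_def by blast
    then have "p \<in> derived Dstar M" "q \<in> derived Dstar M" using com_derived[OF gM] by auto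
    then show "p*q = q*p" using metaM unfolding metabelian_def abelian_set_def by simp
  qed
  have nX: "\<forall>m\<in>M. \<forall>p\<in>X. m*p*inverse m \<in> X"
  proof (intro ballI)
    fix m p assume m: "m \<in> M" and "p \<in> X"
    then obtain x y where p: "p = x*y*inverse x*inverse y" "x \<in> M" "y \<in> M" unfolding X_def by blast
    have "m*x*inverse m \<in> M" "m*y*inverse m \<in> M" using m p Mm Mi by auto
    then show "m*p*inverse m \<in> X" unfolding X_def p(1) conj_comm[OF Mz[OF m]]
      by (intro CollectI exI conjI) (rule refl, assumption+)
  qed
  define E where "E = gen (center \<union> X)"
  have dE: "ds E" unfolding E_def by (rule gen_ds)
  have XE: "X \<subseteq> E" unfolding E_def using gen_incl[of "center \<union> X"] by blast
  have cE: "\<forall>x\<in>E. \<forall>y\<in>E. x*y = y*x" unfolding E_def using comm_cen[OF Xc] .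
  have nE: "\<forall>m\<in>M. \<forall>z\<in>E. m*z*inverse m \<in> E" unfolding E_def
    by (rule norm_gen[OF gM]) (use nX gen_incl[of "center \<union> X"] in blast)
  have XA: "X \<subseteq> A"
  proof -
    from KL[OF maxM dE nE] show ?thesis
    proof (elim disjE)
      assume "E = UNIV" then show ?thesis using cE nc by simp
    next
      assume "E \<subseteq> center" then show ?thesis using XE XM cA by blast
    next
      assume EM: "E - {0} \<subseteq> M"
      define R where "R = gen (center \<union> (A \<union> E))"
      have dR: "ds R" unfolding R_def by (rule gen_ds)
      have AER: "A \<union> E \<subseteq> R" unfolding R_def using gen_incl[of "center \<union> (A \<union> E)"] by blast
      have nR: "\<forall>m\<in>M. \<forall>z\<in>R. m*z*inverse m \<in> R" unfolding R_def
      proof (rule norm_gen[OF gM], intro ballI)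
        fix m y assume "m \<in> M" "y \<in> A \<union> E"
        then have "m*y*inverse m \<in> A \<union> E"
        proof (elim UnE)
          assume "y \<in> A" then show ?thesis using nA \<open>m \<in> M\<close> by blast
        next
          assume "y \<in> E" then show ?thesis using nE \<open>m \<in> M\<close> by blast
        qed
        then show "m*y*inverse m \<in> gen (center \<union> (A \<union> E))" using gen_incl[of "center \<union> (A \<union> E)"] by blast
      qed
      from KL[OF maxM dR nR] show ?thesis
      proof (elim disjE)
        assume RU: "R = UNIV"
        have cc: "a*e*inverse a*inverse e \<in> center" if a: "a \<in> A" and e: "e \<in> E" "e \<noteq> 0" for a e
        proof -
          have eM: "e \<in> M" using EM e by auto
          have aM: "a \<in> M" using AM a by auto
          have "e*inverse a*inverse e \<in> A" using nA eM Ai a by blast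
          then have "a*(e*inverse a*inverse e) \<in> A" using Am a by blast
          then have cAm: "a*e*inverse a*inverse e \<in> A" by (simp add: mult.assoc)
          have "a*e*inverse a \<in> E" using nE aM e by blast
          then have cEm: "a*e*inverse a*inverse e \<in> E" using dsops(4,5)[OF dE] e by blast
          have "\<forall>y\<in>center \<union> (A \<union> E). (a*e*inverse a*inverse e)*y = y*(a*e*inverse a*inverse e)"
          proof
            fix y assume "y \<in> center \<union> (A \<union> E)"
            then show "(a*e*inverse a*inverse e)*y = y*(a*e*inverse a*inverse e)"
            proof (elim UnE)
              assume "y \<in> center" then show ?thesis using cen by metis
            next
              assume "y \<in> A" then show ?thesis using abA cAm by blast
            next
              assume "y \<in> E" then show ?thesis using cE cEm by blast
            qed
          qed
          then show ?thesis using central_of RU unfolding R_def by blast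
        qed
        have AE: "a*e = e*a" if a: "a \<in> A" and e: "e \<in> E" for a e
        proof (cases "e = 0 \<or> e + 1 = 0")
          case True
          then show ?thesis
          proof (elim disjE)
            assume "e + 1 = 0" then have "e = -1" by (simp add: add_eq_0_iff2)
            then show ?thesis by simp
          qed simp
        next
          case False
          have a0: "a \<noteq> 0" using a AM Mz by auto
          have e1: "e + 1 \<in> E" using dsops(2,3)[OF dE] e by blast
          show ?thesis
          proof (rule trick)
            show "a*e = (a*e*inverse a*inverse e)*e*a" using comm_eq[OF a0, of e] False by simp
            show "a*(e+1) = (a*(e+1)*inverse a*inverse (e+1))*(e+1)*a"
              using comm_eq[OF a0, of "e+1"] False by simp
            show "(a*e*inverse a*inverse e)*a = a*(a*e*inverse a*inverse e)"
            proof -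
              have "a*e*inverse a*inverse e \<in> center" using cc[OF a e] False by blast
              then show ?thesis by (rule cen)
            qed
            show "(a*(e+1)*inverse a*inverse (e+1))*a = a*(a*(e+1)*inverse a*inverse (e+1))"
            proof -
              have "a*(e+1)*inverse a*inverse (e+1) \<in> center" using cc[OF a e1] False by blast
              then show ?thesis by (rule cen)
            qed
          qed
        qed
        have "\<forall>x\<in>A \<union> E. \<forall>y\<in>A \<union> E. x*y = y*x"
        proof (intro ballI)
          fix x y assume x: "x \<in> A \<union> E" and y: "y \<in> A \<union> E"
          show "x*y = y*x"
          proof (cases "x \<in> A")
            case xa: True
            show ?thesis
            proof (cases "y \<in> A")
              case True then show ?thesis using abA xa by blast
            next
              case False then have "y \<in> E" using y by blast
              then show ?thesis using AE xa by blast
            qed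
          next
            case xa: False
            then have xe: "x \<in> E" using x by blast
            show ?thesis
            proof (cases "y \<in> A")
              case True then show ?thesis using AE xe by (metis)
            next
              case False then have "y \<in> E" using y by blast
              then show ?thesis using cE xe by blast
            qed
          qed
        qed
        from comm_cen[OF this] show ?thesis using RU nc unfolding R_def by simp
      next
        assume "R \<subseteq> center" then show ?thesis using XE AER XM cA by blast
      next
        assume RM: "R - {0} \<subseteq> M"
        have cR: "\<forall>x\<in>R. \<forall>y\<in>R. x*y = y*x" using HR_M[OF gM metaM dR RM] .
        have AR: "A \<subseteq> R" using AER by blast
        have RA: "R - {0} = A" using field_A[OF gM mA dR RM cR nR AR] .
        show ?thesis
        proof
          fix p assume p: "p \<in> X"
          have "p \<in> R" using p XE AER by blast
          moreover have "p \<noteq> 0" using p XM Mz by blast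
          ultimately show "p \<in> A" using RA by blast
        qed
      qed
    qed
  qed
  have AsN: "A \<subseteq> N" using AN by auto
  have nN: "\<forall>m\<in>M. \<forall>n\<in>N. m*n*inverse m \<in> N"
  proof (intro ballI)
    fix m n assume m: "m \<in> M" and n: "n \<in> N"
    have nM: "n \<in> M" using n NM by auto
    have "m*n*inverse m*inverse n \<in> X" unfolding X_def using m nM by blast
    then have "(m*n*inverse m*inverse n)*n \<in> N" using XA AsN Nm n by blast
    then show "m*n*inverse m \<in> N" using comm_eq2[OF Mz[OF nM]] by simp
  qed
  define K where "K = gen (center \<union> N)"
  have dK: "ds K" unfolding K_def by (rule gen_ds)
  have NK: "N \<subseteq> K" unfolding K_def using gen_incl[of "center \<union> N"] by blast
  have nK: "\<forall>m\<in>M. \<forall>z\<in>K. m*z*inverse m \<in> K" unfolding K_def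
    by (rule norm_gen[OF gM]) (use nN gen_incl[of "center \<union> N"] in blast)
  have NA: "\<not> N \<subseteq> A" using AN by auto
  from KL[OF maxM dK nK] show ?thesis
  proof (elim disjE)
    assume "K = UNIV" then show ?thesis unfolding irreducible_subgroup_def K_def by simp
  next
    assume "K \<subseteq> center" then show ?thesis using NK NM cA NA by blast
  next
    assume KM: "K - {0} \<subseteq> M"
    have cK: "\<forall>x\<in>K. \<forall>y\<in>K. x*y = y*x" using HR_M[OF gM metaM dK KM] .
    have "K - {0} = A" using field_A[OF gM mA dK KM cK nK] AsN NK by blast
    then show ?thesis using NK NM Mz NA by blast
  qed
qed


end
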